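(* Let $p>1$, $\alpha\in\mathbb{R}$, $K_1>0$. There exists $C(K_1)>0$ such that for all $|z|\le K_1$ and all $s\ge1$, $$\left|h(s)|z|^{p-1}z\frac{\ln^\alpha(\psi_1^2(s)z^2+2)}{\ln^\alpha(\psi_1^2(s)+2)}-\frac{|z|^{p-1}z}{p-1}\right|\le\frac{C(K_1)}{s}.$$
   Context: For $\tau>0$ let $\Psi(\tau)>0$ be the unique number with $\int_{\Psi(\tau)}^\infty\frac{dx}{x^p\ln^\alpha(x^2+2)}=\tau$ (equivalently, for $T>0$, $\psi(t)=\Psi(T-t)$ is the positive solution of $\psi'=\psi^p\ln^\alpha(\psi^2+2)$ with $\psi\to+\infty$ as $t\to T$); $\psi_1(s)=\Psi(e^{-s})$ and $h(s)=e^{-s}\psi_1^{p-1}(s)\ln^\alpha(\psi_1^2(s)+2)$. *)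

theory Defs
  imports "HOL-Analysis.Analysis"
begin

text \<open>Psi p a tau: the unique y > 0 with integral from y to infinity of
  1 / (x^p (ln(x^2+2))^a) dx equal to tau (improper integral as the
  Henstock-Kurzweil integral over the unbounded interval {y..}).\<close>
definition Psi :: "real \<Rightarrow> real \<Rightarrow> real \<Rightarrow> real" where
  "Psi p a tau = (THE y. y > 0 \<and>
     ((\<lambda>x. 1 / (x powr p * (ln (x\<^sup>2 + 2)) powr a)) has_integral tau) {y..})"

definition psi1 :: "real \<Rightarrow> real \<Rightarrow> real \<Rightarrow> real" where
  "psi1 p a s = Psi p a (exp (- s))"

definition hfun :: "real \<Rightarrow> real \<Rightarrow> real \<Rightarrow> real" where
  "hfun p a s = exp (- s) * (psi1 p a s) powr (p - 1) * (ln ((psi1 p a s)\<^sup>2 + 2)) powr a"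

end

theory Submission imports Defs "HOL-Real_Asymp.Real_Asymp" begin


definition ff :: "real \<Rightarrow> real \<Rightarrow> real \<Rightarrow> real" where
  "ff p a x = 1 / (x powr p * (ln (x\<^sup>2 + 2)) powr a)"
definition Phi :: "real \<Rightarrow> real \<Rightarrow> real \<Rightarrow> real" where
  "Phi p a x = x powr (1-p) * ln (x\<^sup>2+2) powr (-a) / (p-1)"
definition eps :: "real \<Rightarrow> real \<Rightarrow> real \<Rightarrow> real" where
  "eps p a x = 2*a*x\<^sup>2 / ((p-1)*(x\<^sup>2+2)*ln (x\<^sup>2+2))"
definition gg :: "real \<Rightarrow> real \<Rightarrow> real \<Rightarrow> real" where
  "gg p a x = ff p a x * (1 + eps p a x)"

lemma sq2pos: "0 < (x::real)\<^sup>2 + 2" using zero_le_power2[of x] by linarith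

lemma Lpos: "ln ((x::real)\<^sup>2 + 2) > 0"
  by (smt (verit) ln_gt_zero zero_le_power2)
lemma sq2ne: "(x::real)\<^sup>2 + 2 \<noteq> 0" using sq2pos[of x] by linarith
lemma Lne: "ln ((x::real)\<^sup>2 + 2) \<noteq> 0" using Lpos[of x] by linarith

lemma Lge: "ln ((x::real)\<^sup>2 + 2) \<ge> ln 2"
  by (subst ln_le_cancel_iff) (auto simp: sq2pos)

lemma alg0: "X>0 \<Longrightarrow> A>0 \<Longrightarrow> (L::real)>0 \<Longrightarrow> (D::real)>0 \<Longrightarrow> (q::real)>0 \<Longrightarrow>
  ((-q)*(1/X)*(1/A) + (x/X)*((-a)*(1/(A*L))*((2*x)/D)))/q = -(1/(X*A)*(1+2*a*(x*x)/(q*D*L)))"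
  by (simp add: field_simps)

lemma alg: "X>0 \<Longrightarrow> A>0 \<Longrightarrow> (L::real)>0 \<Longrightarrow> (x::real)>0 \<Longrightarrow> (p::real)>1 \<Longrightarrow>
  ((1-p)*(1/X)*(1/A) + (x/X)*((-a)*(1/(A*L))*((2*x)/(x\<^sup>2+2))))/(p-1) = -(1/(X*A)*(1+2*a*x\<^sup>2/((p-1)*(x\<^sup>2+2)*L)))"
  using alg0[of X A L "x\<^sup>2+2" "p-1" x a] sq2pos[of x] by (simp add: power2_eq_square)

lemma Phi_deriv:
  assumes "p > 1" "x > 0"
  shows "(Phi p a has_real_derivative - gg p a x) (at x)"
proof -
  define L where "L = ln (x\<^sup>2+2)"
  have L: "L > 0" using Lpos L_def by simp
  have "(Phi p a has_real_derivative
     ((1-p) * x powr (1-p-1) * L powr (-a) + x powr (1-p) * ((-a) * L powr (-a-1) * ((2*x)/(x\<^sup>2+2))))/(p-1)) (at x)"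
    unfolding Phi_def L_def using assms L[unfolded L_def] add_pos_nonneg[of 2 "x*x"]
    by (auto intro!: derivative_eq_intros simp: power2_eq_square)
  moreover have "((1-p) * x powr (1-p-1) * L powr (-a) + x powr (1-p) * ((-a) * L powr (-a-1) * ((2*x)/(x\<^sup>2+2))))/(p-1)
     = - gg p a x"
  proof -
    have e1: "x powr (1-p-1) = 1 / x powr p" using assms by (simp add: powr_diff powr_minus_divide)
    have e2: "x powr (1-p) = x / x powr p" using assms by (simp add: powr_diff)
    have e3: "L powr (-a) = 1 / L powr a" by (simp add: powr_minus_divide)
    have e4: "L powr (-a-1) = 1 / (L powr a * L)" using L by (simp add: powr_diff powr_minus_divide)
    have xp: "x powr p > 0" using assms by simp
    have La: "L powr a > 0" using L by simp
    show ?thesis unfolding gg_def ff_def eps_def L_def[symmetric] e1 e2 e3 e4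
      by (rule alg) (use assms xp La L in auto)
  qed
  ultimately show ?thesis by simp
qed

definition X0 :: "real \<Rightarrow> real \<Rightarrow> real" where "X0 p a = exp (2*\<bar>a\<bar>/(p-1))"
definition GG :: "real \<Rightarrow> real \<Rightarrow> real \<Rightarrow> real" where "GG p a y = integral {y..} (ff p a)"
definition dlt :: "real \<Rightarrow> real \<Rightarrow> real \<Rightarrow> real" where "dlt p a y = 2*\<bar>a\<bar>/((p-1)*ln (y\<^sup>2+2))"

lemma L_mono: "0 \<le> y \<Longrightarrow> y \<le> x \<Longrightarrow> ln (y\<^sup>2+2) \<le> ln ((x::real)\<^sup>2+2)"
  by (subst ln_le_cancel_iff) (auto simp: sq2pos power_mono)

lemma powr_le_max: "0 < lo \<Longrightarrow> lo \<le> x \<Longrightarrow> x \<le> hi \<Longrightarrow> (x::real) powr e \<le> max (lo powr e) (hi powr e)"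
proof (cases "e \<ge> 0")
  case True
  assume "0 < lo" "lo \<le> x" "x \<le> hi"
  thus ?thesis using powr_mono2[OF True, of x hi] by auto
next
  case False
  assume "0 < lo" "lo \<le> x" "x \<le> hi"
  thus ?thesis using powr_mono2'[of e lo x] False by auto
qed

definition B1 :: "real \<Rightarrow> real \<Rightarrow> real" where
  "B1 p a = 4*\<bar>a\<bar>/(p-1)\<^sup>2 + (X0 p a powr (p-1) * max (ln 2 powr a) (ln ((X0 p a)\<^sup>2+2) powr a) + 1/(p-1)) * ln ((X0 p a)\<^sup>2+2)"

definition AA :: "real \<Rightarrow> real \<Rightarrow> real" where
  "AA p a = 1 + 3*(p-1)/2 + \<bar>a\<bar> + \<bar>ln (GG p a (X0 p a))\<bar> / ln 2"

context
  fixes p a :: real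
  assumes p1: "p > 1"
begin

lemma ff_pos: "x > 0 \<Longrightarrow> ff p a x > 0"
  unfolding ff_def using Lpos[of x] by simp

lemma cont_ff: "continuous_on {0<..} (ff p a)"
  unfolding ff_def using Lpos sq2pos
  by (auto intro!: continuous_intros simp: Lne sq2ne)

lemma cont_gg: "continuous_on {0<..} (gg p a)"
  unfolding gg_def eps_def using Lpos sq2pos p1
  by (auto intro!: continuous_intros cont_ff simp: Lne sq2ne)

lemma X0_pos: "X0 p a > 0" by (simp add: X0_def)
lemma X0_ge1: "X0 p a \<ge> 1" using p1 by (simp add: X0_def)

lemma eps_abs: "\<bar>eps p a x\<bar> \<le> dlt p a x"
proof -
  have L: "ln (x\<^sup>2+2) > 0" by (rule Lpos)
  have q: "x\<^sup>2/(x\<^sup>2+2) \<le> 1" using sq2pos[of x] by simp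
  have "\<bar>eps p a x\<bar> = dlt p a x * (x\<^sup>2/(x\<^sup>2+2))"
    unfolding eps_def dlt_def using L p1 sq2pos[of x]
    by (simp add: abs_mult abs_divide abs_of_pos)
  also have "\<dots> \<le> dlt p a x" using q L p1 unfolding dlt_def
    by (intro mult_right_le_one_le) auto
  finally show ?thesis .
qed

lemma dlt_mono: "0 \<le> y \<Longrightarrow> y \<le> x \<Longrightarrow> dlt p a x \<le> dlt p a y"
  unfolding dlt_def using p1 Lpos[of y] L_mono[of y x]
  by (intro divide_left_mono mult_left_mono) auto

lemma dlt_nonneg: "dlt p a x \<ge> 0"
  unfolding dlt_def using p1 Lpos[of x] by auto

lemma dlt_X0: "x \<ge> X0 p a \<Longrightarrow> dlt p a x \<le> 1/2"
proof -
  assume x: "x \<ge> X0 p a"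
  have xp: "x > 0" using x X0_pos by linarith
  have h1: "2*\<bar>a\<bar>/(p-1) \<le> ln x" 
  proof -
    have "2*\<bar>a\<bar>/(p-1) = ln (X0 p a)" by (simp add: X0_def)
    also have "\<dots> \<le> ln x" using x X0_pos by (subst ln_le_cancel_iff) auto
    finally show ?thesis .
  qed
  have h2: "2 * ln x = ln (x\<^sup>2)" using xp by (simp add: ln_realpow)
  have h3: "ln (x\<^sup>2) \<le> ln (x\<^sup>2+2)" using xp by (subst ln_le_cancel_iff) (auto simp: sq2pos)
  have Lb: "ln (x\<^sup>2+2) \<ge> 4*\<bar>a\<bar>/(p-1)" using h1 h2 h3 by simp
  have L: "ln (x\<^sup>2+2) > 0" by (rule Lpos)
  have "2*\<bar>a\<bar> \<le> 1/2 * ((p-1)*ln (x\<^sup>2+2))"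
    using Lb p1 by (simp add: field_simps)
  thus ?thesis unfolding dlt_def using L p1 by (simp add: divide_le_eq)
qed

lemma eps_half: "x \<ge> X0 p a \<Longrightarrow> \<bar>eps p a x\<bar> \<le> 1/2"
  using eps_abs dlt_X0 by (meson order_trans)

lemma ftc_gg: "0 < y \<Longrightarrow> y \<le> b \<Longrightarrow> (gg p a has_integral (Phi p a y - Phi p a b)) {y..b}"
proof -
  assume y: "0 < y" "y \<le> b"
  have "(gg p a has_integral ((\<lambda>x. - Phi p a x) b - (\<lambda>x. - Phi p a x) y)) {y..b}"
  proof (rule fundamental_theorem_of_calculus[OF y(2)])
    fix x assume "x \<in> {y..b}"
    hence x: "x > 0" using y by auto
    have "((\<lambda>x. - Phi p a x) has_real_derivative - (- gg p a x)) (at x)"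
      by (rule DERIV_minus) (rule Phi_deriv[OF p1 x])
    thus "((\<lambda>x. - Phi p a x) has_vector_derivative gg p a x) (at x within {y..b})"
      by (simp add: has_real_derivative_iff_has_vector_derivative[symmetric] has_field_derivative_at_within)
  qed
  thus ?thesis by simp
qed

lemma Phi_lim: "((\<lambda>y. Phi p a y) \<longlongrightarrow> 0) at_top"
  unfolding Phi_def using p1 by real_asymp

lemma Phi_lim0: "filterlim (\<lambda>y. Phi p a y) at_top (at_right 0)"
  unfolding Phi_def using p1 by real_asymp

lemma gg_nonneg: "x \<ge> X0 p a \<Longrightarrow> gg p a x \<ge> 0"
proof -
  assume x: "x \<ge> X0 p a"
  hence "x > 0" using X0_pos by linarith
  thus ?thesis unfolding gg_def using eps_half[OF x] ff_pos[of x]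
    by (intro mult_nonneg_nonneg) auto
qed

lemma gg_has_int: "y \<ge> X0 p a \<Longrightarrow> (gg p a has_integral Phi p a y) {y..}"
proof -
  assume y: "y \<ge> X0 p a"
  have yp: "y > 0" using y X0_pos by linarith
  show ?thesis
  proof (rule has_integral_to_inf)
    fix b
    show "gg p a integrable_on {y..b}"
      by (rule integrable_continuous_interval, rule continuous_on_subset[OF cont_gg]) (use yp in auto)
  next
    have "((\<lambda>b. Phi p a y - Phi p a b) \<longlongrightarrow> Phi p a y - 0) at_top"
      by (intro tendsto_intros Phi_lim)
    moreover have "eventually (\<lambda>b. integral {y..b} (gg p a) = Phi p a y - Phi p a b) at_top"
      using ftc_gg[OF yp] eventually_at_top_linorder by blast
    ultimately show "((\<lambda>b. integral {y..b} (gg p a)) \<longlongrightarrow> Phi p a y) at_top"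
      by (simp add: tendsto_cong)
  next
    fix x assume "y \<le> x" thus "gg p a x \<ge> 0" using y gg_nonneg by simp
  qed
qed


lemma ff_int_X0: "y \<ge> X0 p a \<Longrightarrow> ff p a integrable_on {y..}"
proof -
  assume y: "y \<ge> X0 p a"
  have yp: "y > 0" using y X0_pos by linarith
  show ?thesis
  proof (rule measurable_bounded_by_integrable_imp_integrable_real)
    show "ff p a \<in> borel_measurable (lebesgue_on {y..})"
      by (rule continuous_imp_measurable_on_sets_lebesgue, rule continuous_on_subset[OF cont_ff])
         (use yp in auto)
    show "(\<lambda>x. 2 * gg p a x) integrable_on {y..}"
      using integrable_on_cmult_left[of "gg p a" "{y..}" 2] gg_has_int[OF y] by auto
    show "{y..} \<in> sets lebesgue" by simp
    fix x assume "x \<in> {y..}"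
    hence x: "x \<ge> X0 p a" "x > 0" using y yp by auto
    have "1 + 2 * eps p a x \<ge> 0" using eps_half[OF x(1)] unfolding abs_le_iff by linarith
    hence "ff p a x * (1 + 2 * eps p a x) \<ge> 0" using ff_pos[OF x(2)] by simp
    hence "ff p a x \<le> 2 * (ff p a x * (1 + eps p a x))"
      by (simp add: algebra_simps)
    thus "\<bar>ff p a x\<bar> \<le> 2 * gg p a x" using ff_pos[OF x(2)] by (simp add: gg_def)
  qed
qed

lemma ff_int_ivl: "0 < y \<Longrightarrow> ff p a integrable_on {y..b}"
  by (rule integrable_continuous_interval, rule continuous_on_subset[OF cont_ff]) auto

lemma ff_int: "y > 0 \<Longrightarrow> ff p a integrable_on {y..}"
proof (cases "y \<ge> X0 p a")
  case True thus ?thesis by (rule ff_int_X0)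
next
  case False
  assume yp: "y > 0"
  have "(ff p a has_integral (integral {y..X0 p a} (ff p a) + integral {X0 p a..} (ff p a))) ({y..X0 p a} \<union> {X0 p a..})"
  proof (rule has_integral_Un)
    have "{y..X0 p a} \<inter> {X0 p a..} = {X0 p a}" using False by auto
    thus "negligible ({y..X0 p a} \<inter> {X0 p a..})" by simp
  qed (use ff_int_ivl[OF yp] ff_int_X0[of "X0 p a"] in auto)
  moreover have "{y..X0 p a} \<union> {X0 p a..} = {y..}" using False by auto
  ultimately show ?thesis by auto
qed

lemma GG_split: "0 < y \<Longrightarrow> y \<le> b \<Longrightarrow> GG p a y = integral {y..b} (ff p a) + GG p a b"
proof -
  assume y: "0 < y" "y \<le> b"
  have "(ff p a has_integral (integral {y..b} (ff p a) + integral {b..} (ff p a))) ({y..b} \<union> {b..})"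
    by (rule has_integral_Un) (use ff_int_ivl[OF y(1)] ff_int[of b] y in auto)
  moreover have "{y..b} \<union> {b..} = {y..}" using y by auto
  ultimately show ?thesis unfolding GG_def by auto
qed

lemma GG_nonneg: "0 < y \<Longrightarrow> GG p a y \<ge> 0"
  unfolding GG_def
proof (rule integral_nonneg[OF ff_int])
  fix x assume "0 < y" "x \<in> {y..}"
  hence "x > 0" by auto
  thus "0 \<le> ff p a x" using ff_pos by (simp add: less_imp_le)
qed

lemma int_pos: "0 < y \<Longrightarrow> y < b \<Longrightarrow> integral {y..b} (ff p a) > 0"
proof -
  assume y: "0 < y" "y < b"
  have "continuous_on {y..b} (ff p a)" by (rule continuous_on_subset[OF cont_ff]) (use y in auto)
  hence "\<exists>m\<in>{y..b}. \<forall>x\<in>{y..b}. ff p a m \<le> ff p a x"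
    using continuous_attains_inf[of "{y..b}" "ff p a"] y by auto
  then obtain m where m: "m \<in> {y..b}" "\<And>x. x \<in> {y..b} \<Longrightarrow> ff p a m \<le> ff p a x"
    by blast
  have mp: "ff p a m > 0" using m(1) y by (intro ff_pos) auto
  have "((\<lambda>x. ff p a m) has_integral ((b - y) * ff p a m)) {y..b}"
    using has_integral_const_real[of "ff p a m" y b] y by simp
  hence "(b - y) * ff p a m \<le> integral {y..b} (ff p a)"
    by (rule has_integral_le) (use ff_int_ivl[OF y(1)] m(2) in auto)
  moreover have "(b - y) * ff p a m > 0" using y mp by simp
  ultimately show ?thesis by linarith
qed

lemma GG_strict: "0 < y \<Longrightarrow> y < b \<Longrightarrow> GG p a b < GG p a y"
  using GG_split[of y b] int_pos[of y b] by auto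

lemma GG_mono: "0 < y \<Longrightarrow> y \<le> b \<Longrightarrow> GG p a b \<le> GG p a y"
  using GG_strict[of y b] by (cases "y = b") auto

lemma PhiG: "y \<ge> X0 p a \<Longrightarrow> \<bar>Phi p a y - GG p a y\<bar> \<le> dlt p a y * GG p a y"
proof -
  assume y: "y \<ge> X0 p a"
  have yp: "y > 0" using y X0_pos by linarith
  have fi: "(ff p a has_integral GG p a y) {y..}" unfolding GG_def using ff_int[OF yp] by auto
  have "((\<lambda>x. gg p a x - ff p a x) has_integral (Phi p a y - GG p a y)) {y..}"
    by (rule has_integral_diff[OF gg_has_int[OF y] fi])
  hence e: "((\<lambda>x. ff p a x * eps p a x) has_integral (Phi p a y - GG p a y)) {y..}"
    by (simp add: gg_def algebra_simps)
  have fd: "((\<lambda>x. dlt p a y * ff p a x) has_integral (dlt p a y * GG p a y)) {y..}"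
    using has_integral_mult_right[OF fi] by simp
  have fd2: "((\<lambda>x. - (dlt p a y * ff p a x)) has_integral - (dlt p a y * GG p a y)) {y..}"
    using has_integral_neg[OF fd] by simp
  have bnd: "\<bar>ff p a x * eps p a x\<bar> \<le> dlt p a y * ff p a x" if "x \<in> {y..}" for x
  proof -
    have x: "x > 0" "y \<le> x" using that yp by auto
    have "\<bar>eps p a x\<bar> \<le> dlt p a y" using eps_abs[of x] dlt_mono[of y x] x yp by linarith
    thus ?thesis using ff_pos[OF x(1)] by (simp add: abs_mult mult_left_mono mult.commute)
  qed
  have b1: "ff p a x * eps p a x \<le> dlt p a y * ff p a x" if "x \<in> {y..}" for x
    using bnd[OF that] unfolding abs_le_iff by linarith
  have b2: "- (dlt p a y * ff p a x) \<le> ff p a x * eps p a x" if "x \<in> {y..}" for x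
    using bnd[OF that] unfolding abs_le_iff by linarith
  have "Phi p a y - GG p a y \<le> dlt p a y * GG p a y"
    by (rule has_integral_le[OF e fd b1])
  moreover have "- (dlt p a y * GG p a y) \<le> Phi p a y - GG p a y"
    by (rule has_integral_le[OF fd2 e b2])
  ultimately show ?thesis by linarith
qed


lemma exists_lo: "\<tau> > 0 \<Longrightarrow> \<exists>y. 0 < y \<and> y \<le> X0 p a \<and> GG p a y \<ge> \<tau>"
proof -
  assume t: "\<tau> > 0"
  define M where "M = Phi p a (X0 p a) + (1 + dlt p a 0) * \<tau>"
  have "eventually (\<lambda>y. M \<le> Phi p a y) (at_right 0)"
    using Phi_lim0 filterlim_at_top by blast
  then obtain b where b: "b > 0" "\<And>y. y > 0 \<Longrightarrow> y < b \<Longrightarrow> M \<le> Phi p a y"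
    unfolding eventually_at_right_field by auto
  define y where "y = min b (X0 p a) / 2"
  have y: "0 < y" "y < b" "y < X0 p a" using b X0_pos unfolding y_def by auto
  have My: "M \<le> Phi p a y" using b y by auto
  have d0: "dlt p a 0 \<ge> 0" by (rule dlt_nonneg)
  have gi: "(gg p a has_integral (Phi p a y - Phi p a (X0 p a))) {y..X0 p a}"
    using ftc_gg[of y "X0 p a"] y by auto
  have fi: "((\<lambda>x. (1 + dlt p a 0) * ff p a x) has_integral ((1 + dlt p a 0) * integral {y..X0 p a} (ff p a))) {y..X0 p a}"
    using has_integral_mult_right[OF integrable_integral[OF ff_int_ivl[OF y(1)]]] by simp
  have "Phi p a y - Phi p a (X0 p a) \<le> (1 + dlt p a 0) * integral {y..X0 p a} (ff p a)"
  proof (rule has_integral_le[OF gi fi])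
    fix x assume "x \<in> {y..X0 p a}"
    hence x: "x > 0" using y by auto
    have "eps p a x \<le> dlt p a 0" using eps_abs[of x] dlt_mono[of 0 x] x by auto
    thus "gg p a x \<le> (1 + dlt p a 0) * ff p a x"
      unfolding gg_def using ff_pos[OF x] by (simp add: mult.commute mult_left_mono)
  qed
  also have "integral {y..X0 p a} (ff p a) \<le> GG p a y"
    using GG_split[of y "X0 p a"] GG_nonneg[OF X0_pos] y by auto
  finally have "Phi p a y - Phi p a (X0 p a) \<le> (1 + dlt p a 0) * GG p a y"
    using d0 by (smt (verit) mult_left_mono)
  hence "(1 + dlt p a 0) * \<tau> \<le> (1 + dlt p a 0) * GG p a y" using My unfolding M_def by linarith
  hence "\<tau> \<le> GG p a y" using d0 by (subst (asm) mult_le_cancel_left_pos) auto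
  thus ?thesis using y by (intro exI[of _ y]) auto
qed

lemma exists_hi: "\<tau> > 0 \<Longrightarrow> \<exists>y. X0 p a \<le> y \<and> GG p a y \<le> \<tau>"
proof -
  assume t: "\<tau> > 0"
  have "eventually (\<lambda>y. Phi p a y < \<tau>/2) at_top"
    using order_tendstoD(2)[OF Phi_lim, of "\<tau>/2"] t by simp
  then obtain N where N: "\<And>y. y \<ge> N \<Longrightarrow> Phi p a y < \<tau>/2"
    unfolding eventually_at_top_linorder by auto
  define y where "y = max N (X0 p a)"
  have y: "y \<ge> X0 p a" "Phi p a y < \<tau>/2" using N unfolding y_def by auto
  have "GG p a y - Phi p a y \<le> dlt p a y * GG p a y" using PhiG[OF y(1)] by linarith
  also have "\<dots> \<le> 1/2 * GG p a y"
    using dlt_X0[OF y(1)] GG_nonneg[of y] y(1) X0_pos by (intro mult_right_mono) auto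
  finally have "GG p a y \<le> \<tau>" using y by linarith
  thus ?thesis using y by auto
qed

lemma exists_GG: "\<tau> > 0 \<Longrightarrow> \<exists>y>0. GG p a y = \<tau>"
proof -
  assume t: "\<tau> > 0"
  obtain lo where lo: "0 < lo" "lo \<le> X0 p a" "GG p a lo \<ge> \<tau>" using exists_lo[OF t] by auto
  obtain hi where hi: "X0 p a \<le> hi" "GG p a hi \<le> \<tau>" using exists_hi[OF t] by auto
  have le: "lo \<le> hi" using lo hi by linarith
  have c: "continuous_on {lo..hi} (\<lambda>x. integral {lo..x} (ff p a))"
    by (rule indefinite_integral_continuous_1[OF ff_int_ivl[OF lo(1)]])
  have "\<exists>x. lo \<le> x \<and> x \<le> hi \<and> integral {lo..x} (ff p a) = GG p a lo - \<tau>"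
  proof (rule IVT'[OF _ _ le c])
    show "integral {lo..lo} (ff p a) \<le> GG p a lo - \<tau>" using lo by simp
    show "GG p a lo - \<tau> \<le> integral {lo..hi} (ff p a)" using GG_split[OF lo(1) le] hi by linarith
  qed
  then obtain x where x: "lo \<le> x" "x \<le> hi" "integral {lo..x} (ff p a) = GG p a lo - \<tau>" by blast
  have "GG p a x = \<tau>" using GG_split[OF lo(1) x(1)] x(3) by linarith
  thus ?thesis using x lo by (intro exI[of _ x]) auto
qed

lemma ff_lam: "(\<lambda>x. 1 / (x powr p * (ln (x\<^sup>2 + 2)) powr a)) = ff p a"
  by (rule ext) (simp add: ff_def)

lemma Psi_char: "\<tau> > 0 \<Longrightarrow> Psi p a \<tau> > 0 \<and> GG p a (Psi p a \<tau>) = \<tau>"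
proof -
  assume t: "\<tau> > 0"
  let ?P = "\<lambda>y. y > 0 \<and> (ff p a has_integral \<tau>) {y..}"
  have iff: "?P y \<longleftrightarrow> y > 0 \<and> GG p a y = \<tau>" for y
    unfolding GG_def using ff_int[of y] has_integral_iff by blast
  have ex1: "\<exists>!y. ?P y"
  proof -
    obtain y where y: "y > 0" "GG p a y = \<tau>" using exists_GG[OF t] by auto
    moreover have "z = y" if "z > 0" "GG p a z = \<tau>" for z
    proof (rule ccontr)
      assume "z \<noteq> y"
      hence "z < y \<or> y < z" by linarith
      thus False using GG_strict[of z y] GG_strict[of y z] that y by auto
    qed
    ultimately show ?thesis unfolding iff by blast
  qed
  have "?P (Psi p a \<tau>)" unfolding Psi_def ff_lam by (rule theI'[OF ex1])
  thus ?thesis unfolding iff .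
qed


lemma Phi_k: "y > 0 \<Longrightarrow> (p-1) * Phi p a y * (y powr (p-1) * ln (y\<^sup>2+2) powr a) = 1"
proof -
  assume y: "y > 0"
  have L: "ln (y\<^sup>2+2) > 0" by (rule Lpos)
  have "(p-1) * Phi p a y * (y powr (p-1) * ln (y\<^sup>2+2) powr a)
     = (y powr (1-p) * y powr (p-1)) * (ln (y\<^sup>2+2) powr (-a) * ln (y\<^sup>2+2) powr a)"
    unfolding Phi_def using p1 by (simp add: field_simps)
  also have "\<dots> = 1" using y L by (simp add: powr_add[symmetric])
  finally show ?thesis .
qed

lemma Phi_pos: "y > 0 \<Longrightarrow> Phi p a y > 0"
  unfolding Phi_def using p1 Lpos[of y] by simp

lemma GG_pos: "y > 0 \<Longrightarrow> GG p a y > 0"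
  using GG_strict[of y "y+1"] GG_nonneg[of "y+1"] by auto

lemma h_bound:
  assumes y: "y > 0" and t: "GG p a y \<le> 1"
  shows "\<bar>GG p a y * (y powr (p-1) * ln (y\<^sup>2+2) powr a) - 1/(p-1)\<bar> \<le> B1 p a / ln (y\<^sup>2+2)"
proof -
  define L where "L = ln (y\<^sup>2+2)"
  define k where "k = y powr (p-1) * L powr a"
  define G where "G = GG p a y"
  define P where "P = Phi p a y"
  define LX where "LX = ln ((X0 p a)\<^sup>2+2)"
  define H1 where "H1 = X0 p a powr (p-1) * max (ln 2 powr a) (LX powr a) + 1/(p-1)"
  have Lp: "L > 0" unfolding L_def by (rule Lpos)
  have kp: "k > 0" unfolding k_def using y Lp by simp
  have Gp: "G > 0" unfolding G_def by (rule GG_pos[OF y])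
  have Pk: "(p-1) * P * k = 1" unfolding P_def k_def L_def by (rule Phi_k[OF y])
  have H1nn: "H1 \<ge> 0" unfolding H1_def using p1 by (intro add_nonneg_nonneg mult_nonneg_nonneg) (auto simp: le_max_iff_disj)
  have B1eq: "B1 p a = 4*\<bar>a\<bar>/(p-1)\<^sup>2 + H1 * LX" unfolding B1_def H1_def LX_def by simp
  have "\<bar>G * k - 1/(p-1)\<bar> \<le> B1 p a / L"
  proof (cases "y \<ge> X0 p a")
    case True
    have d: "\<bar>P - G\<bar> \<le> dlt p a y * G" unfolding P_def G_def by (rule PhiG[OF True])
    have dh: "dlt p a y \<le> 1/2" by (rule dlt_X0[OF True])
    have dn: "dlt p a y \<ge> 0" by (rule dlt_nonneg)
    have "1/(p-1) = P * k" using Pk p1 by (simp add: field_simps)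
    hence "G * k - 1/(p-1) = k * (G - P)" by (simp add: algebra_simps)
    hence "\<bar>G * k - 1/(p-1)\<bar> = k * \<bar>G - P\<bar>" using kp by (simp add: abs_mult)
    also have "\<dots> \<le> k * (dlt p a y * G)" using d kp by (simp add: abs_minus_commute)
    also have "\<dots> = dlt p a y * (G * k)" by simp
    also have "G * k \<le> 2/(p-1)"
    proof -
      have "dlt p a y * G \<le> 1/2 * G" using dh Gp by (intro mult_right_mono) auto
      hence "G/2 \<le> P" using d unfolding abs_le_iff by linarith
      hence "(p-1) * (G/2) * k \<le> (p-1) * P * k" using p1 kp by (intro mult_right_mono mult_left_mono) auto
      thus ?thesis using Pk p1 by (simp add: field_simps)
    qed
    hence "dlt p a y * (G * k) \<le> dlt p a y * (2/(p-1))" using dn by (rule mult_left_mono)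
    also have "dlt p a y * (2/(p-1)) = (4*\<bar>a\<bar>/(p-1)\<^sup>2) / L"
      unfolding dlt_def L_def using p1 by (simp add: field_simps power2_eq_square)
    also have "\<dots> \<le> B1 p a / L" unfolding B1eq using Lp H1nn
      by (intro divide_right_mono) (auto simp: LX_def Lpos less_imp_le)
    finally show ?thesis .
  next
    case False
    have yX: "y \<le> X0 p a" using False by linarith
    have LL: "ln 2 \<le> L" "L \<le> LX" unfolding L_def LX_def using L_mono[of y "X0 p a"] y yX Lge by auto
    have "y powr (p-1) \<le> X0 p a powr (p-1)" using y yX p1 by (intro powr_mono2) auto
    moreover have "L powr a \<le> max (ln 2 powr a) (LX powr a)" by (rule powr_le_max) (use LL in auto)
    ultimately have kb: "k \<le> X0 p a powr (p-1) * max (ln 2 powr a) (LX powr a)"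
      unfolding k_def using Lp by (intro mult_mono) auto
    have gk: "G * k \<le> k" using t kp unfolding G_def by (simp add: mult_le_cancel_right1)
    have gk0: "0 \<le> G * k" using Gp kp by simp
    have pp: "0 < 1/(p-1)" using p1 by simp
    have "\<bar>G * k - 1/(p-1)\<bar> \<le> H1" unfolding H1_def abs_le_iff using gk gk0 pp kb by linarith
    also have "H1 \<le> H1 * LX / L" using H1nn LL Lp by (simp add: field_simps mult_left_mono)
    also have "\<dots> \<le> B1 p a / L" unfolding B1eq using Lp p1
      by (intro divide_right_mono) auto
    finally show ?thesis .
  qed
  thus ?thesis unfolding G_def k_def L_def .
qed


lemma ln3: "ln (3::real) \<ge> 1"
  using exp_le ln_le_cancel_iff[of "exp 1" 3] by simp

lemma s_bound:
  assumes y: "y > 0" and G: "GG p a y = exp (- s)"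
  shows "s \<le> AA p a * ln (y\<^sup>2+2)"
proof -
  define L where "L = ln (y\<^sup>2+2)"
  have Lp: "L > 0" unfolding L_def by (rule Lpos)
  have L2: "L \<ge> ln 2" unfolding L_def by (rule Lge)
  have ln2: "ln (2::real) > 0" by simp
  have GX: "GG p a (X0 p a) > 0" by (rule GG_pos[OF X0_pos])
  have sG: "s = - ln (GG p a y)" using G by simp
  show ?thesis
  proof (cases "y \<ge> X0 p a")
    case True
    define P where "P = Phi p a y"
    have Pp: "P > 0" unfolding P_def by (rule Phi_pos[OF y])
    have d: "\<bar>P - GG p a y\<bar> \<le> dlt p a y * GG p a y" unfolding P_def by (rule PhiG[OF True])
    have "dlt p a y * GG p a y \<le> 1/2 * GG p a y"
      using dlt_X0[OF True] GG_pos[OF y] by (intro mult_right_mono) auto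
    hence "2/3 * P \<le> GG p a y" using d unfolding abs_le_iff by linarith
    hence "ln (2/3 * P) \<le> ln (GG p a y)" using Pp by (subst ln_le_cancel_iff) auto
    hence s1: "s \<le> - ln (2/3 * P)" using sG by linarith
    have y1: "y \<ge> 1" using True X0_ge1 by linarith
    have Pd: "P = (y powr (1-p) * L powr (-a)) / (p-1)" unfolding P_def Phi_def L_def ..
    have A: "y powr (1-p) > 0" "L powr (-a) > 0" using y Lp by auto
    have e1: "ln (2/3 * P) = ln (2/3) + ln P" using Pp by (intro ln_mult_pos) auto
    have e2: "ln P = ln (y powr (1-p) * L powr (-a)) - ln (p-1)" unfolding Pd using A p1 by (intro ln_divide_pos) auto
    have e3: "ln (y powr (1-p) * L powr (-a)) = ln (y powr (1-p)) + ln (L powr (-a))" using A by (intro ln_mult_pos) auto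
    have "ln (2/3 * P) = ln (2/3) + ((1-p) * ln y + (-a) * ln L - ln (p-1))"
      using e1 e2 e3 by simp
    hence s2: "s \<le> ln (3/2) + (p-1) * ln y + a * ln L + ln (p-1)"
      using s1 by (simp add: ln_div algebra_simps)
    have L1: "L \<ge> 1"
    proof -
      have "ln 3 \<le> L" unfolding L_def using L_mono[of 1 y] y1 by simp
      thus ?thesis using ln3 by linarith
    qed
    have t1: "ln (3/2::real) \<le> L" using ln_le_minus_one[of "3/2::real"] L1 by simp
    have t2: "(p-1) * ln y \<le> (p-1)/2 * L"
    proof -
      have "2 * ln y = ln (y\<^sup>2)" using y by (simp add: ln_realpow)
      also have "\<dots> \<le> L" unfolding L_def using y by (subst ln_le_cancel_iff) (auto simp: sq2pos)
      finally have "2 * ln y \<le> L" .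
      hence "(p-1) * (2 * ln y) \<le> (p-1) * L" using p1 by (intro mult_left_mono) auto
      thus ?thesis by (simp add: algebra_simps)
    qed
    have lnL: "0 \<le> ln L" "ln L \<le> L" using L1 ln_le_minus_one[of L] by auto
    have t3: "a * ln L \<le> \<bar>a\<bar> * L"
    proof -
      have "a * ln L \<le> \<bar>a\<bar> * ln L" using lnL by (intro mult_right_mono) auto
      also have "\<dots> \<le> \<bar>a\<bar> * L" using lnL by (intro mult_left_mono) auto
      finally show ?thesis .
    qed
    have t4: "ln (p-1) \<le> (p-1) * L"
    proof -
      have "ln (p-1) \<le> p - 1" using ln_le_minus_one[of "p-1"] p1 by simp
      also have "\<dots> \<le> (p-1) * L" using L1 p1 by simp
      finally show ?thesis .
    qed
    have eq: "(1 + 3*(p-1)/2 + \<bar>a\<bar>) * L = L + (p-1)/2 * L + \<bar>a\<bar> * L + (p-1) * L"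
      by (simp add: field_simps)
    have "s \<le> (1 + 3*(p-1)/2 + \<bar>a\<bar>) * L"
      unfolding eq using s2 t1 t2 t3 t4 by linarith
    also have "\<dots> \<le> AA p a * L" unfolding AA_def using Lp
      by (intro mult_right_mono) auto
    finally show ?thesis unfolding L_def .
  next
    case False
    have "GG p a (X0 p a) \<le> GG p a y" using GG_mono[of y "X0 p a"] y False by auto
    hence "ln (GG p a (X0 p a)) \<le> ln (GG p a y)" using GX by simp
    hence "s \<le> \<bar>ln (GG p a (X0 p a))\<bar>" using sG by linarith
    also have "\<dots> \<le> \<bar>ln (GG p a (X0 p a))\<bar> / ln 2 * L"
      using L2 ln2 by (simp add: field_simps mult_right_mono)
    also have "\<dots> \<le> AA p a * L" unfolding AA_def using Lp p1
      by (intro mult_right_mono) auto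
    finally show ?thesis unfolding L_def .
  qed
qed

end

lemma mvt_powr:
  fixes lo hi r a :: real
  assumes lo: "0 < lo" "lo \<le> 1" and hi: "1 \<le> hi" and r: "lo \<le> r" "r \<le> hi"
  shows "\<bar>r powr a - 1\<bar> \<le> \<bar>a\<bar> * (lo powr (a-1) + hi powr (a-1)) * \<bar>r - 1\<bar>"
proof -
  have der: "DERIV (\<lambda>x. x powr a) x :> a * x powr (a-1)" if "lo \<le> x" for x
    using has_real_derivative_powr[of x a] that lo by auto
  have bnd: "\<bar>a * \<xi> powr (a-1)\<bar> \<le> \<bar>a\<bar> * (lo powr (a-1) + hi powr (a-1))" if "lo \<le> \<xi>" "\<xi> \<le> hi" for \<xi>
  proof -
    have "\<xi> powr (a-1) \<le> max (lo powr (a-1)) (hi powr (a-1))" by (rule powr_le_max) (use that lo in auto)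
    also have "\<dots> \<le> lo powr (a-1) + hi powr (a-1)" by auto
    finally have "\<xi> powr (a-1) \<le> lo powr (a-1) + hi powr (a-1)" .
    thus ?thesis by (simp add: abs_mult mult_left_mono)
  qed
  consider "r = 1" | "r < 1" | "r > 1" by linarith
  thus ?thesis
  proof cases
    case 1 thus ?thesis by simp
  next
    case 2
    obtain \<xi> where x: "r < \<xi>" "\<xi> < 1" "1 powr a - r powr a = (1 - r) * (a * \<xi> powr (a-1))"
      using MVT2[OF 2, of "\<lambda>x. x powr a" "\<lambda>x. a * x powr (a-1)"] der r by auto
    have "\<bar>r powr a - 1\<bar> = \<bar>1 - r\<bar> * \<bar>a * \<xi> powr (a-1)\<bar>" using x(3) by (simp add: abs_mult abs_minus_commute)
    also have "\<dots> \<le> \<bar>1 - r\<bar> * (\<bar>a\<bar> * (lo powr (a-1) + hi powr (a-1)))"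
      by (intro mult_left_mono bnd) (use x r hi in auto)
    finally show ?thesis by (simp add: abs_minus_commute mult.commute)
  next
    case 3
    obtain \<xi> where x: "1 < \<xi>" "\<xi> < r" "r powr a - 1 powr a = (r - 1) * (a * \<xi> powr (a-1))"
      using MVT2[OF 3, of "\<lambda>x. x powr a" "\<lambda>x. a * x powr (a-1)"] der lo by auto
    have "\<bar>r powr a - 1\<bar> = \<bar>r - 1\<bar> * \<bar>a * \<xi> powr (a-1)\<bar>" using x(3) by (simp add: abs_mult)
    also have "\<dots> \<le> \<bar>r - 1\<bar> * (\<bar>a\<bar> * (lo powr (a-1) + hi powr (a-1)))"
      by (intro mult_left_mono bnd) (use x r lo in auto)
    finally show ?thesis by (simp add: mult.commute)
  qed
qed

lemma neglog:
  fixes w p :: real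
  assumes "0 < w" "p > 0"
  shows "w powr p * (- ln w) \<le> 1/p"
proof -
  have "- p * ln w = ln (w powr (-p))" using assms by simp
  also have "\<dots> \<le> w powr (-p) - 1" using assms by (intro ln_le_minus_one) auto
  finally have "- p * ln w \<le> w powr (-p)" by simp
  hence "w powr p * (- p * ln w) \<le> w powr p * w powr (-p)" using assms by (intro mult_left_mono) auto
  also have "w powr p * w powr (-p) = 1" using assms by (simp add: powr_add[symmetric])
  finally have "p * (w powr p * (- ln w)) \<le> 1" by (simp add: algebra_simps)
  thus ?thesis using assms by (simp add: field_simps mult.commute)
qed

lemma polyexp:
  fixes L b c :: real
  assumes "L > 0" "b > 0" "c > 0"
  shows "L powr b \<le> (b/c) powr b * exp (c * L)"
proof -
  have "ln (L * c / b) \<le> L * c / b - 1" using assms by (intro ln_le_minus_one) auto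
  moreover have "ln (L * c / b) = ln L - ln (b/c)" using assms
    by (simp add: ln_divide_pos ln_mult_pos)
  ultimately have "ln L \<le> L * c / b + ln (b/c)" by linarith
  hence "b * ln L \<le> b * (L * c / b + ln (b/c))" using assms by (intro mult_left_mono) auto
  also have "\<dots> = c * L + b * ln (b/c)" using assms by (simp add: field_simps)
  finally have "exp (b * ln L) \<le> exp (c * L + b * ln (b/c))" by simp
  also have "\<dots> = (b/c) powr b * exp (c * L)" using assms by (simp add: exp_add powr_def mult.commute)
  finally show ?thesis using assms by (simp add: powr_def mult.commute)
qed

lemma powr_range:
  fixes Q r a :: real
  assumes "1 \<le> Q" "1/Q \<le> r" "r \<le> Q"
  shows "r powr a \<le> Q powr \<bar>a\<bar>"
proof (cases "a \<ge> 0")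
  case True
  have rp: "r > 0" using assms by (smt (verit) divide_pos_pos)
  have "r powr a \<le> Q powr a" using assms rp True by (intro powr_mono2) auto
  thus ?thesis using True by simp
next
  case False
  have rp: "0 < 1/Q" using assms by simp
  have "r powr a \<le> (1/Q) powr a" using powr_mono2'[of a "1/Q" r] False assms rp by auto
  also have "\<dots> = Q powr (-a)" using assms by (simp add: powr_divide powr_minus_divide)
  finally show ?thesis using False by simp
qed

lemma sq2pos': "0 < (x::real)\<^sup>2 + 2" using zero_le_power2[of x] by linarith

lemma zlemma:
  fixes p a K1 :: real
  assumes p1: "p > 1" and K: "K1 > 0"
  shows "\<exists>B2\<ge>0. \<forall>y w. y > 0 \<longrightarrow> 0 < w \<longrightarrow> w \<le> K1 \<longrightarrow>
     w powr p * \<bar>(ln (y\<^sup>2 * w\<^sup>2 + 2) / ln (y\<^sup>2 + 2)) powr a - 1\<bar> \<le> B2 / ln (y\<^sup>2 + 2)"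
proof -
  define m where "m = max 1 (K1\<^sup>2)"
  define R where "R = 1 + ln m / ln 2"
  define D where "D = \<bar>a\<bar> * ((1/2) powr (a-1) + R powr (a-1))"
  define b where "b = \<bar>a\<bar> + 1"
  define Bs where "Bs = 2 * (R / ln 2) powr \<bar>a\<bar> * (4*b/p) powr b"
  define Bb where "Bb = D * (2/p + K1 powr p * ln m)"
  have m1: "m \<ge> 1" unfolding m_def by simp
  have lnm: "ln m \<ge> 0" using m1 by simp
  have ln2: "ln (2::real) > 0" by simp
  have R1: "R \<ge> 1" unfolding R_def using lnm ln2 by simp
  have Dn: "D \<ge> 0" unfolding D_def by simp
  have Bbn: "Bb \<ge> 0" unfolding Bb_def using Dn lnm p1 K by simp
  have Bsn: "Bs \<ge> 0" unfolding Bs_def using R1 ln2 by simp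
  show ?thesis
  proof (intro exI[of _ "Bb + Bs"] conjI allI impI)
    show "0 \<le> Bb + Bs" using Bbn Bsn by simp
    fix y w :: real
    assume y: "y > 0" and w: "0 < w" "w \<le> K1"
    define L where "L = ln (y\<^sup>2 + 2)"
    define u where "u = ln (y\<^sup>2 * w\<^sup>2 + 2)"
    define r where "r = u / L"
    have L2: "L \<ge> ln 2" unfolding L_def using sq2pos'[of y] by (subst ln_le_cancel_iff) auto
    have Lp: "L > 0" using L2 ln2 by linarith
    have yw0: "0 \<le> y\<^sup>2 * w\<^sup>2" by simp
    have yw: "0 < y\<^sup>2 * w\<^sup>2 + 2" using yw0 by linarith
    have u2: "u \<ge> ln 2" unfolding u_def using yw by (subst ln_le_cancel_iff) auto
    have up: "u > 0" using u2 ln2 by linarith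
    have rp: "r > 0" unfolding r_def using up Lp by simp
    have uu: "u \<le> L + ln m"
    proof -
      have "w\<^sup>2 \<le> K1\<^sup>2" using w by (intro power_mono) auto
      hence "w\<^sup>2 \<le> m" unfolding m_def by simp
      hence "y\<^sup>2 * w\<^sup>2 \<le> y\<^sup>2 * m" by (intro mult_left_mono) auto
      hence "y\<^sup>2 * w\<^sup>2 + 2 \<le> m * (y\<^sup>2 + 2)" using m1 by (simp add: algebra_simps)
      hence "u \<le> ln (m * (y\<^sup>2 + 2))" unfolding u_def using m1
        using yw by (subst ln_le_cancel_iff) (auto intro: add_pos_nonneg)
      also have "\<dots> = ln m + L" unfolding L_def using m1 sq2pos'[of y] by (intro ln_mult_pos) auto
      finally show ?thesis by simp
    qed
    have rm1: "r - 1 = (u - L) / L" unfolding r_def using Lp by (simp add: field_simps)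
    have r1: "r - 1 \<le> ln m / L" unfolding rm1 using uu Lp by (intro divide_right_mono) auto
    have rR: "r \<le> R"
    proof -
      have "ln m / L \<le> ln m / ln 2" using lnm L2 mult_pos_pos[OF Lp ln2] by (intro divide_left_mono) auto
      thus ?thesis using r1 unfolding R_def by linarith
    qed
    have "w powr p * \<bar>r powr a - 1\<bar> \<le> (Bb + Bs) / L"
    proof (cases "w \<ge> exp (- L / 4)")
      case True
      define lam where "lam = (if w < 1 then - 2 * ln w else 0)"
      have lamn: "lam \<ge> 0" unfolding lam_def using w by auto
      have lw: "- ln w \<le> L / 4"
      proof -
        have "ln (exp (- L/4)) \<le> ln w" using True w by (subst ln_le_cancel_iff) auto
        thus ?thesis by simp
      qed
      have rlo: "r - 1 \<ge> - lam / L \<and> r \<ge> 1/2"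
      proof (cases "w < 1")
        case True
        have "w\<^sup>2 \<le> 1" using True w by (simp add: power_le_one)
        hence "w\<^sup>2 * (y\<^sup>2 + 2) \<le> y\<^sup>2 * w\<^sup>2 + 2" by (simp add: algebra_simps)
        hence "ln (w\<^sup>2 * (y\<^sup>2 + 2)) \<le> u" unfolding u_def using w sq2pos'[of y] yw
          by (subst ln_le_cancel_iff) auto
        moreover have "ln (w\<^sup>2 * (y\<^sup>2 + 2)) = 2 * ln w + L" unfolding L_def
          using w sq2pos'[of y] by (simp add: ln_mult_pos ln_realpow)
        ultimately have ul: "u \<ge> L + 2 * ln w" by simp
        hence "r - 1 \<ge> 2 * ln w / L" unfolding rm1 using Lp by (intro divide_right_mono) auto
        moreover have "2 * ln w / L \<ge> - 1/2" using lw Lp by (simp add: field_simps)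
        ultimately show ?thesis unfolding lam_def using True by auto
      next
        case False
        have "y\<^sup>2 * 1 \<le> y\<^sup>2 * w\<^sup>2" using False w by (intro mult_left_mono) (auto simp: one_le_power)
        hence "L \<le> u" unfolding L_def u_def using sq2pos'[of y] yw by (subst ln_le_cancel_iff) auto
        hence "r \<ge> 1" unfolding r_def using Lp by (simp add: field_simps)
        thus ?thesis unfolding lam_def using False by auto
      qed
      have q1: "lam / L \<ge> 0" "ln m / L \<ge> 0" using lamn lnm Lp by auto
      have rabs: "\<bar>r - 1\<bar> \<le> (lam + ln m) / L" using rlo r1 q1
        unfolding abs_le_iff add_divide_distrib by linarith
      have mv: "\<bar>r powr a - 1\<bar> \<le> D * \<bar>r - 1\<bar>"
        unfolding D_def using mvt_powr[of "1/2" R r a] rlo rR R1 by auto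
      have wl: "w powr p * lam \<le> 2/p"
      proof (cases "w < 1")
        case True
        have "w powr p * (- ln w) \<le> 1/p" by (rule neglog) (use w p1 in auto)
        thus ?thesis unfolding lam_def using True by simp
      next
        case False thus ?thesis unfolding lam_def using p1 by simp
      qed
      have wm: "w powr p * ln m \<le> K1 powr p * ln m"
        using w p1 lnm by (intro mult_right_mono powr_mono2) auto
      have "D * \<bar>r - 1\<bar> \<le> D * ((lam + ln m) / L)" using rabs Dn by (rule mult_left_mono)
      hence "\<bar>r powr a - 1\<bar> \<le> D * ((lam + ln m) / L)" using mv by linarith
      hence "w powr p * \<bar>r powr a - 1\<bar> \<le> w powr p * (D * ((lam + ln m) / L))"
        by (intro mult_left_mono) auto
      also have "\<dots> = D * (w powr p * lam + w powr p * ln m) / L" by (simp add: algebra_simps)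
      also have "\<dots> \<le> D * (2/p + K1 powr p * ln m) / L"
        using wl wm Dn Lp by (intro divide_right_mono mult_left_mono) auto
      also have "\<dots> = Bb / L" unfolding Bb_def ..
      also have "\<dots> \<le> (Bb + Bs) / L" using Bsn Lp by (intro divide_right_mono) auto
      finally show ?thesis .
    next
      case False
      have wp: "w powr p \<le> exp (- p * L / 4)"
      proof -
        have "w powr p \<le> exp (- L / 4) powr p" using False w p1 by (intro powr_mono2) auto
        also have "\<dots> = exp (- p * L / 4)" by (simp add: powr_def)
        finally show ?thesis .
      qed
      define Q where "Q = R * L / ln 2"
      have Ll: "L / ln 2 \<ge> 1" using L2 ln2 by simp
      have Q1: "Q \<ge> 1" unfolding Q_def using mult_mono[OF R1 Ll] R1 by simp
      have rQ: "r \<le> Q"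
      proof -
        have "R \<le> R * (L / ln 2)" using R1 L2 ln2 by (simp add: field_simps)
        thus ?thesis using rR unfolding Q_def by simp
      qed
      have Qr: "1/Q \<le> r"
      proof -
        have "1/Q = ln 2 / (R * L)" unfolding Q_def by simp
        also have "\<dots> \<le> ln 2 / L" using R1 Lp ln2 by (intro divide_left_mono) (auto intro: mult_pos_pos)
        also have "\<dots> \<le> r" unfolding r_def using u2 Lp by (intro divide_right_mono) auto
        finally show ?thesis .
      qed
      have ra: "r powr a \<le> Q powr \<bar>a\<bar>" by (rule powr_range[OF Q1 Qr rQ])
      have Qa: "Q powr \<bar>a\<bar> \<ge> 1" using Q1 by (simp add: ge_one_powr_ge_zero)
      have "\<bar>r powr a - 1\<bar> \<le> 2 * Q powr \<bar>a\<bar>" using ra Qa powr_ge_zero[of r a] unfolding abs_le_iff by linarith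
      also have "Q powr \<bar>a\<bar> = (R / ln 2) powr \<bar>a\<bar> * L powr \<bar>a\<bar>"
        unfolding Q_def using R1 Lp ln2 by (simp add: powr_mult[symmetric] field_simps)
      finally have ra2: "\<bar>r powr a - 1\<bar> \<le> 2 * (R / ln 2) powr \<bar>a\<bar> * L powr \<bar>a\<bar>" by simp
      have pe: "L powr b \<le> (4*b/p) powr b * exp (p/4 * L)"
      proof -
        have bp: "b > 0" unfolding b_def by simp
        have e: "b/(p/4) = 4*b/p" by simp
        show ?thesis using polyexp[OF Lp bp, of "p/4"] p1 unfolding e by simp
      qed
      have Lb: "L powr b = L powr \<bar>a\<bar> * L" unfolding b_def using Lp by (simp add: powr_add)
      have "exp (- p * L / 4) * L powr \<bar>a\<bar> * L \<le> (4*b/p) powr b"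
      proof -
        have "exp (- p * L / 4) * (L powr \<bar>a\<bar> * L) \<le> exp (- p * L / 4) * ((4*b/p) powr b * exp (p/4 * L))"
          using pe Lb by (intro mult_left_mono) auto
        also have "\<dots> = (4*b/p) powr b" by (simp add: exp_add[symmetric] field_simps)
        finally show ?thesis by (simp add: mult.assoc)
      qed
      hence eL: "exp (- p * L / 4) * L powr \<bar>a\<bar> \<le> (4*b/p) powr b / L" using Lp by (simp add: field_simps)
      have "w powr p * \<bar>r powr a - 1\<bar> \<le> exp (- p * L / 4) * (2 * (R / ln 2) powr \<bar>a\<bar> * L powr \<bar>a\<bar>)"
        using wp ra2 by (intro mult_mono) auto
      also have "\<dots> = 2 * (R / ln 2) powr \<bar>a\<bar> * (exp (- p * L / 4) * L powr \<bar>a\<bar>)" by simp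
      also have "\<dots> \<le> 2 * (R / ln 2) powr \<bar>a\<bar> * ((4*b/p) powr b / L)"
        using eL by (intro mult_left_mono) auto
      also have "\<dots> = Bs / L" unfolding Bs_def by simp
      also have "\<dots> \<le> (Bb + Bs) / L" using Bbn Lp by (intro divide_right_mono) auto
      finally show ?thesis .
    qed
    thus "w powr p * \<bar>(ln (y\<^sup>2 * w\<^sup>2 + 2) / ln (y\<^sup>2 + 2)) powr a - 1\<bar> \<le> (Bb + Bs) / ln (y\<^sup>2 + 2)"
      unfolding r_def u_def L_def .
  qed
qed


lemma B1_nonneg: "p > 1 \<Longrightarrow> B1 p a \<ge> 0"
  unfolding B1_def using Lpos[of "X0 p a"]
  by (intro add_nonneg_nonneg mult_nonneg_nonneg) (auto simp: le_max_iff_disj)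

theorem lemmaA7:
  fixes p a K1 :: real
  assumes "p > 1" and "K1 > 0"
  shows "\<exists>C > 0. \<forall>z s. \<bar>z\<bar> \<le> K1 \<longrightarrow> s \<ge> 1 \<longrightarrow>
     \<bar>hfun p a s * (\<bar>z\<bar> powr (p - 1) * z)
        * ((ln ((psi1 p a s)\<^sup>2 * z\<^sup>2 + 2)) powr a / (ln ((psi1 p a s)\<^sup>2 + 2)) powr a)
      - \<bar>z\<bar> powr (p - 1) * z / (p - 1)\<bar> \<le> C / s"
proof -
  note p1 = assms(1)
  obtain B2 where B2: "B2 \<ge> 0" "\<And>y w. y > 0 \<Longrightarrow> 0 < w \<Longrightarrow> w \<le> K1 \<Longrightarrow>
     w powr p * \<bar>(ln (y\<^sup>2 * w\<^sup>2 + 2) / ln (y\<^sup>2 + 2)) powr a - 1\<bar> \<le> B2 / ln (y\<^sup>2 + 2)"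
    using zlemma[OF assms] by blast
  define A where "A = AA p a"
  define B where "B = B1 p a"
  define H where "H = 1/(p-1) + B / ln 2"
  define C0 where "C0 = H * B2 + K1 powr p * B"
  have ln2: "ln (2::real) > 0" by simp
  have Bn: "B \<ge> 0" unfolding B_def by (rule B1_nonneg[OF p1])
  have Hn: "H \<ge> 0" unfolding H_def using p1 Bn ln2 by simp
  have C0n: "C0 \<ge> 0" unfolding C0_def using Hn B2(1) Bn by simp
  have A1: "A \<ge> 1" unfolding A_def AA_def using p1 by simp
  show ?thesis
  proof (intro exI[of _ "A * C0 + 1"] conjI allI impI)
    show "A * C0 + 1 > 0" using A1 C0n by (simp add: add_nonneg_pos)
    fix z s :: real
    assume z: "\<bar>z\<bar> \<le> K1" and s: "s \<ge> 1"
    let ?E = "hfun p a s * (\<bar>z\<bar> powr (p - 1) * z)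
        * ((ln ((psi1 p a s)\<^sup>2 * z\<^sup>2 + 2)) powr a / (ln ((psi1 p a s)\<^sup>2 + 2)) powr a)
      - \<bar>z\<bar> powr (p - 1) * z / (p - 1)"
    have Cs: "0 \<le> (A * C0 + 1) / s" using A1 C0n s by simp
    show "\<bar>?E\<bar> \<le> (A * C0 + 1) / s"
    proof (cases "z = 0")
      case True thus ?thesis using Cs by simp
    next
      case False
      define w where "w = \<bar>z\<bar>"
      have wp: "w > 0" "w \<le> K1" using False z unfolding w_def by auto
      define \<tau> where "\<tau> = exp (- s)"
      have tp: "\<tau> > 0" unfolding \<tau>_def by simp
      have t1: "\<tau> \<le> 1" unfolding \<tau>_def using s by simp
      define y where "y = psi1 p a s"
      have yc: "y > 0" "GG p a y = \<tau>" using Psi_char[OF p1 tp] unfolding y_def psi1_def \<tau>_def by auto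
      define L where "L = ln (y\<^sup>2 + 2)"
      have Lp: "L > 0" unfolding L_def by (rule Lpos)
      have L2: "L \<ge> ln 2" unfolding L_def by (rule Lge)
      define h where "h = hfun p a s"
      have heq: "h = GG p a y * (y powr (p-1) * L powr a)"
        unfolding h_def hfun_def yc(2) y_def[symmetric] L_def \<tau>_def by simp
      have hb: "\<bar>h - 1/(p-1)\<bar> \<le> B / L"
        unfolding heq B_def L_def by (rule h_bound[OF p1 yc(1)]) (use yc t1 in auto)
      have sb: "s \<le> A * L" unfolding A_def L_def by (rule s_bound[OF p1 yc(1)]) (use yc \<tau>_def in auto)
      have hn: "h \<ge> 0" unfolding heq using GG_nonneg[OF p1 yc(1)] yc(1) by simp
      have hH: "h \<le> H"
      proof -
        have "B / L \<le> B / ln 2" using Bn L2 mult_pos_pos[OF Lp ln2] by (intro divide_left_mono) auto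
        thus ?thesis using hb unfolding H_def abs_le_iff by linarith
      qed
      define V where "V = \<bar>z\<bar> powr (p - 1) * z"
      have Vabs: "\<bar>V\<bar> = w powr p"
      proof -
        have "\<bar>V\<bar> = w powr (p-1) * w" unfolding V_def w_def using wp by (simp add: abs_mult)
        also have "\<dots> = w powr p" using wp by (simp add: powr_diff)
        finally show ?thesis .
      qed
      define \<rho> where "\<rho> = (ln (y\<^sup>2 * w\<^sup>2 + 2) / L) powr a"
      have rho: "(ln (y\<^sup>2 * z\<^sup>2 + 2)) powr a / L powr a = \<rho>"
      proof -
        have "z\<^sup>2 = w\<^sup>2" unfolding w_def by simp
        moreover have "ln (y\<^sup>2 * w\<^sup>2 + 2) \<ge> 0"
          using zero_le_mult_iff[of "y\<^sup>2" "w\<^sup>2"] by (simp add: add_increasing2)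
        ultimately show ?thesis unfolding \<rho>_def using Lp by (simp add: powr_divide)
      qed
      have E1: "?E = h * V * ((ln (y\<^sup>2 * z\<^sup>2 + 2)) powr a / L powr a) - V / (p-1)"
        unfolding h_def V_def y_def L_def ..
      have Eeq: "?E = V * (h * (\<rho> - 1)) + V * (h - 1/(p-1))"
        unfolding E1 rho by (simp add: algebra_simps)
      have zb: "w powr p * \<bar>\<rho> - 1\<bar> \<le> B2 / L"
        unfolding \<rho>_def L_def using B2(2)[OF yc(1) wp] .
      have wK: "w powr p \<le> K1 powr p" using wp p1 by (intro powr_mono2) auto
      have "\<bar>?E\<bar> \<le> \<bar>V\<bar> * (h * \<bar>\<rho> - 1\<bar>) + \<bar>V\<bar> * \<bar>h - 1/(p-1)\<bar>"
        unfolding Eeq using hn by (simp add: abs_mult abs_triangle_ineq[THEN order_trans])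
      also have "\<dots> = h * (w powr p * \<bar>\<rho> - 1\<bar>) + w powr p * \<bar>h - 1/(p-1)\<bar>"
        unfolding Vabs by (simp add: algebra_simps)
      also have "\<dots> \<le> H * (B2 / L) + K1 powr p * (B / L)"
        using hn hH zb wK hb Bn Lp B2(1)
        by (intro add_mono mult_mono) (auto intro: mult_nonneg_nonneg)
      also have "\<dots> = C0 / L" unfolding C0_def by (simp add: add_divide_distrib)
      also have "\<dots> \<le> C0 * A / s"
      proof -
        have "1 / L \<le> A / s" using sb Lp s A1 by (simp add: field_simps)
        hence "C0 * (1 / L) \<le> C0 * (A / s)" using C0n by (rule mult_left_mono)
        thus ?thesis by simp
      qed
      also have "\<dots> \<le> (A * C0 + 1) / s" using s by (simp add: divide_right_mono mult.commute)
      finally show ?thesis .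
    qed
  qed
qed

end
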